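(* For a point $(u,v)\in\mathbb{C}^2$, the following are equivalent: (1) $(u,v)\in\mathcal{D}_1$; (2) $|1+u^2-v^2|<1+|u|^2-|v|^2$ and $0<\mathrm{Im}(u(1+\overline{v}))$; (3) the roots of the equation $(u+i)z^2+2vz+(u-i)=0$ lie in $\mathbb{D}$; (4) $|\mathrm{Im}(v)+i\,\mathrm{Im}(\overline{u}v)|<\mathrm{Im}(u)$; (5) $|v|<|u+i|$ and $|\mathrm{Im}(v)+i\,\mathrm{Im}(\overline{u}v)|<\mathrm{Im}(u)$; (6) $\left|\frac{\alpha(u-i)+v}{u+i+\alpha v}\right|<1$ for every $\alpha\in\overline{\mathbb{D}}$; (7) $\left|\frac{u-i+\overline{\alpha}v}{u+i+\alpha v}\right|<1$ for every $\alpha\in\overline{\mathbb{D}}$; (8) $2|\mathrm{Im}(v)+i\,\mathrm{Im}(\overline{u}v)|+|1+u^2-v^2|<|i+u|^2-|v|^2$; (9) $\mathrm{Im}(u)>0$ and there is $\beta=\beta_1+i\beta_2\in\mathbb{D}$ ($\beta_1,\beta_2\in\mathbb{R}$) such that $v+\beta_1u+\beta_2=0$.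
   Context: $\mathbb{D}$ is the open unit disc and $\overline{\mathbb{D}}$ the closed unit disc in $\mathbb{C}$. $\mathcal{D}_1=\{(z_1,z_2)\in\mathbb{C}^2: 1+|z_1|^2-|z_2|^2>|1+z_1^2-z_2^2|,\ \mathrm{Im}(z_1(1+\overline{z_2}))>0\}$. *)

theory Defs
  imports "HOL-Analysis.Analysis"
begin

definition D1 :: "(complex \<times> complex) set" where
  "D1 = {(z1, z2). cmod (1 + z1^2 - z2^2) < 1 + (cmod z1)^2 - (cmod z2)^2
                   \<and> Im (z1 * (1 + cnj z2)) > 0}"

end

theory Submission
  imports Defs
begin

definition hub :: "complex \<Rightarrow> complex \<Rightarrow> bool" where
  "hub u v \<longleftrightarrow> cmod (complex_of_real (Im v) + \<i> * complex_of_real (Im (cnj u * v))) < Im u"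

lemma I1: "(1 + (cmod u)^2 - (cmod v)^2)^2 - (cmod (1+u^2-v^2))^2 = 4*((Im u)^2 - (Im v)^2 - (Im (cnj u * v))^2)"
  unfolding cmod_power2 by (simp add: power2_eq_square algebra_simps)

lemma I2: "(cmod (u - \<i> + cnj aa * v))^2 - (cmod (u + \<i> + aa * v))^2 = -4*Im u - 4 * Re (aa * (complex_of_real (Im v) + \<i> * complex_of_real (Im (cnj u * v))))"
  unfolding cmod_power2 by (simp add: power2_eq_square algebra_simps)

lemma I3: "(cmod (aa * (u - \<i>) + v))^2 - (cmod (u + \<i> + aa * v))^2 = (cmod aa)^2 * (1 + (cmod u)^2 - (cmod v)^2 - 2*Im u) - (1 + (cmod u)^2 - (cmod v)^2 + 2*Im u) - 4 * Re (aa * (complex_of_real (Im v) + \<i> * complex_of_real (Im (cnj u * v))))"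
  unfolding cmod_power2 by (simp add: power2_eq_square algebra_simps)

lemma I4: fixes z :: complex and b d e :: real
  shows "Im ((-\<i> * b * (z^2-1) + 2 * e * z) * cnj (b * z^2 + 2 * d * z + b)) = -((cmod z)^2 - 1) * ((b * Re z + d)^2 + (b * Im z + e)^2 + b^2 - d^2 - e^2)"
  unfolding cmod_power2 by (simp add: power2_eq_square algebra_simps)

lemma wnorm: "cmod (complex_of_real x + \<i> * complex_of_real y) = sqrt (x^2+y^2)"
  by (simp add: cmod_def)

lemma wsq: "(cmod (complex_of_real x + \<i> * complex_of_real y))^2 = x^2+y^2"
  by (simp add: wnorm)

lemma lt_sq_iff: fixes W b :: real assumes "W \<ge> 0" shows "W < b \<longleftrightarrow> b > 0 \<and> W^2 < b^2"
proof
  assume "W < b" thus "b > 0 \<and> W^2 < b^2" using assms by (simp add: power_strict_mono)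
next
  assume "b > 0 \<and> W^2 < b^2" thus "W < b" using assms by (auto intro: power2_less_imp_less)
qed

lemma hub_iff: "hub u v \<longleftrightarrow> Im u > 0 \<and> (Im v)^2 + (Im (cnj u * v))^2 < (Im u)^2"
  unfolding hub_def lt_sq_iff[OF norm_ge_zero] wsq by (rule refl)

lemma S_pos: assumes "Im u > 0" "(Im v)^2 + (Im (cnj u * v))^2 < (Im u)^2"
  shows "(cmod v)^2 < 1 + (cmod u)^2"
proof -
  define a b c d e where "a = Re u" "b = Im u" "c = Re v" "d = Im v" "e = Im (cnj u * v)"
  have bc: "b*c = a*d - e" unfolding a_b_c_d_e_def by simp
  have b0: "b > 0" and h: "d^2 + e^2 < b^2" using assms unfolding a_b_c_d_e_def by auto
  have cs: "(a*d - e)^2 \<le> (a^2+1)*(d^2+e^2)"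
  proof -
    have "(a^2+1)*(d^2+e^2) - (a*d - e)^2 = (a*e+d)^2" by (simp add: power2_eq_square algebra_simps)
    thus ?thesis by (metis diff_ge_0_iff_ge zero_le_power2)
  qed
  have d2: "d^2 \<le> b^2" using h zero_le_power2[of e] by linarith
  have "b^2*c^2 = (a*d-e)^2" by (metis bc power_mult_distrib)
  also have "\<dots> < (a^2+1)*b^2"
  proof -
    have "(a^2+1)*(d^2+e^2) < (a^2+1)*b^2" using h by (intro mult_strict_left_mono) (auto intro: add_nonneg_pos)
    thus ?thesis using cs by linarith
  qed
  finally have 1: "b^2*c^2 < (a^2+1)*b^2" .
  have 2: "b^2*d^2 \<le> b^2*b^2" using d2 by (intro mult_left_mono) auto
  have "b^2*(c^2+d^2) = b^2*c^2 + b^2*d^2" by (simp add: algebra_simps)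
  also have "\<dots> < (a^2+1)*b^2 + b^2*b^2" using 1 2 by linarith
  also have "\<dots> = b^2*(a^2+1+b^2)" by (simp add: algebra_simps)
  finally have "b^2*(c^2+d^2) < b^2*(a^2+1+b^2)" .
  hence "c^2+d^2 < a^2+1+b^2" using b0 by (simp add: mult_less_cancel_left)
  thus ?thesis unfolding cmod_power2 a_b_c_d_e_def by simp
qed

lemma hub_S: "hub u v \<Longrightarrow> (cmod v)^2 < 1 + (cmod u)^2"
  using S_pos hub_iff by blast

lemma D1_hub: "(u, v) \<in> D1 \<longleftrightarrow> hub u v"
proof -
  define b d e S P where "b = Im u" "d = Im v" "e = Im (cnj u * v)"
     "S = 1 + (cmod u)^2 - (cmod v)^2" "P = cmod (1 + u^2 - v^2)"
  have I: "S^2 - P^2 = 4*(b^2 - d^2 - e^2)" using I1[of u v] unfolding b_d_e_S_P_def by simp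
  have im: "Im (u * (1 + cnj v)) = b - e" unfolding b_d_e_S_P_def by (simp add: algebra_simps)
  have D: "(u, v) \<in> D1 \<longleftrightarrow> P < S \<and> 0 < b - e" 
    unfolding D1_def mem_Collect_eq case_prod_conv im b_d_e_S_P_def(4,5)[symmetric] by (rule refl)
  have H: "hub u v \<longleftrightarrow> b > 0 \<and> d^2 + e^2 < b^2" unfolding hub_iff b_d_e_S_P_def by simp
  have P0: "P \<ge> 0" unfolding b_d_e_S_P_def by simp
  show ?thesis unfolding D H
  proof
    assume a: "P < S \<and> 0 < b - e"
    hence "P^2 < S^2" using P0 by (simp add: power_strict_mono)
    hence "4*(b^2-d^2-e^2) > 0" using I by linarith
    hence h: "d^2 + e^2 < b^2" by simp
    have "b > 0"
    proof (rule ccontr)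
      assume "\<not> b > 0"
      hence nb: "-b < -e" "-b \<ge> 0" using a by auto
      have "(-b)^2 < (-e)^2" using power_strict_mono[OF nb, of 2] by simp
      hence "b^2 < e^2" by simp
      thus False using h zero_le_power2[of d] by linarith
    qed
    thus "b > 0 \<and> d^2 + e^2 < b^2" using h by simp
  next
    assume a: "b > 0 \<and> d^2 + e^2 < b^2"
    have "S > 0" using hub_S[of u v] H a unfolding b_d_e_S_P_def by simp
    moreover have "P^2 < S^2" using I a by simp
    ultimately have PS: "P < S" by (auto intro: power2_less_imp_less)
    have e2b: "e^2 < b^2" using a zero_le_power2[of d] by linarith
    have eb: "\<bar>e\<bar> < b"
      by (rule power2_less_imp_less) (use a e2b in auto)
    show "P < S \<and> 0 < b - e" using PS eb by (auto simp: abs_less_iff)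
  qed
qed

lemma c5: "hub u v \<longleftrightarrow> (cmod v < cmod (u + \<i>) \<and> hub u v)"
proof -
  have "hub u v \<Longrightarrow> cmod v < cmod (u + \<i>)"
  proof -
    assume h: "hub u v"
    have "(cmod (u + \<i>))^2 = (cmod u)^2 + 2 * Im u + 1"
      unfolding cmod_power2 by (simp add: power2_eq_square algebra_simps)
    hence "(cmod v)^2 < (cmod (u + \<i>))^2" using hub_S[OF h] h hub_iff by auto
    thus ?thesis by (auto intro: power2_less_imp_less)
  qed
  thus ?thesis by blast
qed

lemma ratio: "(den \<noteq> 0 \<and> cmod (num / den) < 1) \<longleftrightarrow> (cmod num)^2 - (cmod den)^2 < 0"
proof
  assume "den \<noteq> 0 \<and> cmod (num / den) < 1"
  hence "cmod num < cmod den" by (auto simp: norm_divide divide_less_eq_1)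
  thus "(cmod num)^2 - (cmod den)^2 < 0" by (simp add: power_strict_mono)
next
  assume "(cmod num)^2 - (cmod den)^2 < 0"
  hence "cmod num < cmod den" by (auto intro: power2_less_imp_less)
  thus "den \<noteq> 0 \<and> cmod (num / den) < 1" by (auto simp: norm_divide divide_less_eq)
qed

lemma alpha0: fixes w :: complex
  defines "a0 \<equiv> (if w = 0 then 1 else - cnj w / complex_of_real (cmod w))"
  shows "cmod a0 = 1" "Re (a0 * w) = - cmod w"
proof -
  show "cmod a0 = 1" unfolding a0_def by (simp add: norm_divide)
  show "Re (a0 * w) = - cmod w"
  proof (cases "w = 0")
    case True thus ?thesis unfolding a0_def by simp
  next
    case False
    have "a0 * w = - (w * cnj w) / complex_of_real (cmod w)" unfolding a0_def using False by (simp add: algebra_simps)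
    also have "\<dots> = - complex_of_real ((cmod w)^2 / cmod w)" by (simp add: complex_norm_square[symmetric])
    also have "\<dots> = - complex_of_real (cmod w)" using False by (simp add: power2_eq_square)
    finally show ?thesis by simp
  qed
qed

lemma Re_ge: "cmod aa \<le> 1 \<Longrightarrow> Re (aa * w) \<ge> - cmod w"
proof -
  assume "cmod aa \<le> 1"
  hence "cmod (aa * w) \<le> cmod w" by (simp add: norm_mult mult_left_le_one_le)
  thus ?thesis using abs_Re_le_cmod[of "aa * w"] by linarith
qed

lemma c7: "hub u v \<longleftrightarrow> (\<forall>\<alpha> \<in> cball 0 1. u + \<i> + \<alpha> * v \<noteq> 0 \<and>
                cmod ((u - \<i> + cnj \<alpha> * v) / (u + \<i> + \<alpha> * v)) < 1)"
proof -
  define w where "w = complex_of_real (Im v) + \<i> * complex_of_real (Im (cnj u * v))"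
  have G: "(cmod (u - \<i> + cnj aa * v))^2 - (cmod (u + \<i> + aa * v))^2 = -4*Im u - 4 * Re (aa * w)" for aa
    unfolding w_def by (rule I2)
  show ?thesis unfolding ratio G
  proof
    assume h: "hub u v"
    show "\<forall>\<alpha>\<in>cball 0 1. - 4 * Im u - 4 * Re (\<alpha> * w) < 0"
    proof
      fix aa :: complex assume "aa \<in> cball 0 1"
      hence "Re (aa * w) \<ge> - cmod w" by (intro Re_ge) auto
      moreover have "cmod w < Im u" using h unfolding hub_def w_def .
      ultimately show "- 4 * Im u - 4 * Re (aa * w) < 0" by linarith
    qed
  next
    assume h: "\<forall>\<alpha>\<in>cball 0 1. - 4 * Im u - 4 * Re (\<alpha> * w) < 0"
    define a0 where "a0 = (if w = 0 then 1 else - cnj w / complex_of_real (cmod w))"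
    have "cmod a0 = 1" "Re (a0 * w) = - cmod w" unfolding a0_def by (rule alpha0)+
    hence "a0 \<in> cball 0 1" by simp
    from h[rule_format, OF this] have "- 4 * Im u - 4 * Re (a0 * w) < 0" .
    hence "cmod w < Im u" using \<open>Re (a0 * w) = - cmod w\<close> by linarith
    thus "hub u v" unfolding hub_def w_def .
  qed
qed

lemma c6: "hub u v \<longleftrightarrow> (\<forall>\<alpha> \<in> cball 0 1. u + \<i> + \<alpha> * v \<noteq> 0 \<and>
                cmod ((\<alpha> * (u - \<i>) + v) / (u + \<i> + \<alpha> * v)) < 1)"
proof -
  define w where "w = complex_of_real (Im v) + \<i> * complex_of_real (Im (cnj u * v))"
  define S where "S = 1 + (cmod u)^2 - (cmod v)^2"
  have F: "(cmod (aa * (u - \<i>) + v))^2 - (cmod (u + \<i> + aa * v))^2 = (cmod aa)^2 * (S - 2*Im u) - (S + 2*Im u) - 4 * Re (aa * w)" for aa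
    unfolding w_def S_def by (rule I3)
  show ?thesis unfolding ratio F
  proof
    assume h: "hub u v"
    have W: "cmod w < Im u" using h unfolding hub_def w_def .
    have S0: "S > 0" using hub_S[OF h] unfolding S_def by simp
    have b0: "Im u > 0" using h hub_iff by auto
    show "\<forall>\<alpha>\<in>cball 0 1. (cmod \<alpha>)^2 * (S - 2*Im u) - (S + 2*Im u) - 4 * Re (\<alpha> * w) < 0"
    proof
      fix aa :: complex assume "aa \<in> cball 0 1"
      hence r1: "cmod aa \<le> 1" by auto
      define r where "r = cmod aa"
      have r0: "r \<ge> 0" unfolding r_def by simp
      have "Re (aa * w) \<ge> - (r * cmod w)" unfolding r_def using abs_Re_le_cmod[of "aa * w"] by (simp add: norm_mult)
      hence "(cmod aa)^2 * (S - 2*Im u) - (S + 2*Im u) - 4 * Re (aa * w) \<le> r^2 * (S - 2*Im u) - (S + 2*Im u) + 4 * r * cmod w"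
        unfolding r_def by linarith
      also have "\<dots> = S*(r^2-1) - 2*Im u*(1-r)^2 - 4*r*(Im u - cmod w)"
        by (simp add: power2_eq_square algebra_simps)
      also have "\<dots> < 0"
      proof -
        have A: "S*(r^2-1) \<le> 0" using S0 r0 r1 unfolding r_def[symmetric]
          by (intro mult_nonneg_nonpos) (auto simp: power_le_one)
        have B: "2*Im u*(1-r)^2 \<ge> 0" using b0 by simp
        have C: "4*r*(Im u - cmod w) \<ge> 0" using W r0 by simp
        show ?thesis
        proof (cases "r = 1")
          case True
          hence "4*r*(Im u - cmod w) > 0" using W by simp
          thus ?thesis using A B by linarith
        next
          case False
          hence "r < 1" using r1 unfolding r_def by simp
          hence "r^2 < 1" using r0 by (simp add: power_less_one_iff)
          hence "S*(r^2-1) < 0" using S0 by (simp add: mult_pos_neg)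
          thus ?thesis using B C by linarith
        qed
      qed
      finally show "(cmod aa)^2 * (S - 2*Im u) - (S + 2*Im u) - 4 * Re (aa * w) < 0" .
    qed
  next
    assume h: "\<forall>\<alpha>\<in>cball 0 1. (cmod \<alpha>)^2 * (S - 2*Im u) - (S + 2*Im u) - 4 * Re (\<alpha> * w) < 0"
    define a0 where "a0 = (if w = 0 then 1 else - cnj w / complex_of_real (cmod w))"
    have "cmod a0 = 1" "Re (a0 * w) = - cmod w" unfolding a0_def by (rule alpha0)+
    hence "a0 \<in> cball 0 1" by simp
    from h[rule_format, OF this] have "(cmod a0)^2 * (S - 2*Im u) - (S + 2*Im u) - 4 * Re (a0 * w) < 0" .
    hence "cmod w < Im u" using \<open>Re (a0 * w) = - cmod w\<close> \<open>cmod a0 = 1\<close> by simp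
    thus "hub u v" unfolding hub_def w_def .
  qed
qed


lemma c8: "hub u v \<longleftrightarrow> 2 * cmod (complex_of_real (Im v) + \<i> * complex_of_real (Im (cnj u * v)))
              + cmod (1 + u^2 - v^2) < (cmod (\<i> + u))^2 - (cmod v)^2"
proof -
  define b d e S P W where "b = Im u" "d = Im v" "e = Im (cnj u * v)"
     "S = 1 + (cmod u)^2 - (cmod v)^2" "P = cmod (1 + u^2 - v^2)"
     "W = cmod (complex_of_real (Im v) + \<i> * complex_of_real (Im (cnj u * v)))"
  have I: "S^2 - P^2 = 4*(b^2 - W^2)" using I1[of u v] unfolding b_d_e_S_P_W_def wsq by simp
  have iu: "(cmod (\<i> + u))^2 - (cmod v)^2 = S + 2*b" unfolding b_d_e_S_P_W_def cmod_power2
    by (simp add: power2_eq_square algebra_simps)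
  have P0: "P \<ge> 0" and W0: "W \<ge> 0" unfolding b_d_e_S_P_W_def by simp_all
  show ?thesis unfolding iu b_d_e_S_P_W_def(5,6)[symmetric]
  proof
    assume h: "hub u v"
    have Wb: "W < b" using h unfolding hub_def b_d_e_S_P_W_def .
    have S0: "S > 0" using hub_S[OF h] unfolding b_d_e_S_P_W_def by simp
    have "W^2 < b^2" using Wb W0 power_strict_mono[of W b 2] by simp
    hence "4*(b^2-W^2) > 0" by simp
    hence "P^2 < S^2" using I by linarith
    hence "P < S" using S0 by (auto intro: power2_less_imp_less)
    thus "2 * W + P < S + 2 * b" using Wb by linarith
  next
    assume h: "2 * W + P < S + 2 * b"
    define X where "X = S + 2*b - 2*W"
    have X0: "X \<ge> 0" using h P0 unfolding X_def by linarith
    have "P < X" using h unfolding X_def by linarith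
    hence "P^2 < X^2" using P0 power_strict_mono[of P X 2] by simp
    moreover have "X^2 - P^2 = 4*((b-W)*(S+2*b))"
    proof -
      have "X^2 - P^2 = ((S + 2*b - 2*W)^2 - S^2) + 4*(b^2-W^2)" using I unfolding X_def by linarith
      also have "\<dots> = 4*((b-W)*(S+2*b))" by (simp add: power2_eq_square algebra_simps)
      finally show ?thesis .
    qed
    ultimately have "(b-W)*(S+2*b) > 0" by linarith
    moreover have "S + 2*b > 0" using h P0 W0 by linarith
    ultimately have "b - W > 0" by (simp add: zero_less_mult_iff)
    thus "hub u v" unfolding hub_def b_d_e_S_P_W_def by simp
  qed
qed



lemma c9: "hub u v \<longleftrightarrow> (Im u > 0 \<and> (\<exists>\<beta> \<in> ball 0 1.
                v + complex_of_real (Re \<beta>) * u + complex_of_real (Im \<beta>) = 0))"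
proof -
  define a b c d e where "a = Re u" "b = Im u" "c = Re v" "d = Im v" "e = Im (cnj u * v)"
  have ee: "e = a*d - b*c" unfolding a_b_c_d_e_def by simp
  have H: "hub u v \<longleftrightarrow> b > 0 \<and> d^2 + e^2 < b^2" unfolding hub_iff a_b_c_d_e_def by (rule refl)
  show ?thesis unfolding H a_b_c_d_e_def(2)[symmetric]
  proof
    assume h: "b > 0 \<and> d^2 + e^2 < b^2"
    hence b0: "b > 0" and h2: "d^2 + e^2 < b^2" by auto
    define \<beta> where "\<beta> = Complex (-d/b) (e/b)"
    have "(cmod \<beta>)^2 = (d/b)^2 + (e/b)^2" unfolding \<beta>_def cmod_power2 by simp
    also have "\<dots> = (d^2+e^2)/b^2" by (simp add: power_divide add_divide_distrib)
    also have "\<dots> < 1" using b0 h2 by simp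
    finally have "(cmod \<beta>)^2 < 1^2" by simp
    hence "cmod \<beta> < 1" by (rule power2_less_imp_less) simp
    moreover have "v + complex_of_real (Re \<beta>) * u + complex_of_real (Im \<beta>) = 0"
    proof (rule complex_eqI)
      have r: "c + (-d/b)*a + e/b = 0"
      proof -
        have "c + (-d/b)*a + e/b = (b*c - d*a + e)/b" using b0 by (simp add: field_simps)
        also have "\<dots> = 0" unfolding ee by simp
        finally show ?thesis .
      qed
      have i: "d + (-d/b)*b = 0" using b0 by simp
      show "Re (v + complex_of_real (Re \<beta>) * u + complex_of_real (Im \<beta>)) = Re 0"
        using r unfolding \<beta>_def a_b_c_d_e_def by simp
      show "Im (v + complex_of_real (Re \<beta>) * u + complex_of_real (Im \<beta>)) = Im 0"
        using i unfolding \<beta>_def a_b_c_d_e_def by simp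
    qed
    ultimately show "b > 0 \<and> (\<exists>\<beta>\<in>ball 0 1. v + complex_of_real (Re \<beta>) * u + complex_of_real (Im \<beta>) = 0)"
      using b0 by auto
  next
    assume h: "b > 0 \<and> (\<exists>\<beta>\<in>ball 0 1. v + complex_of_real (Re \<beta>) * u + complex_of_real (Im \<beta>) = 0)"
    then obtain \<beta> where bb: "cmod \<beta> < 1" and eq: "v + complex_of_real (Re \<beta>) * u + complex_of_real (Im \<beta>) = 0"
      by auto
    have b0: "b > 0" using h by simp
    have "Re (v + complex_of_real (Re \<beta>) * u + complex_of_real (Im \<beta>)) = 0"
         "Im (v + complex_of_real (Re \<beta>) * u + complex_of_real (Im \<beta>)) = 0" using eq by simp_all
    hence cc: "c = - Re \<beta> * a - Im \<beta>" and dd: "d = - Re \<beta> * b" unfolding a_b_c_d_e_def by (simp_all add: algebra_simps)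
    have e2: "e = Im \<beta> * b" unfolding ee cc dd by (simp add: algebra_simps)
    have "d^2 + e^2 = b^2 * (cmod \<beta>)^2" unfolding dd e2 cmod_power2 by (simp add: power2_eq_square algebra_simps)
    also have "\<dots> < b^2 * 1"
    proof -
      have "(cmod \<beta>)^2 < 1^2" by (rule power_strict_mono) (use bb in auto)
      thus ?thesis using b0 by (intro mult_strict_left_mono) auto
    qed
    finally show "b > 0 \<and> d^2 + e^2 < b^2" using b0 by simp
  qed
qed

lemma c3_fwd:
  assumes h: "hub u v" and eq: "(u + \<i>) * z^2 + 2 * v * z + (u - \<i>) = 0"
  shows "cmod z < 1"
proof -
  define a b c d e where "a = Re u" "b = Im u" "c = Re v" "d = Im v" "e = Im (cnj u * v)"
  have b0: "b > 0" and h2: "d^2 + e^2 < b^2" using h unfolding hub_iff a_b_c_d_e_def by auto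
  define Q where "Q = b * z^2 + 2 * d * z + b"
  define R where "R = -\<i> * b * (z^2-1) + 2 * e * z"
  have bv: "complex_of_real b * v = complex_of_real d * u - complex_of_real e"
    by (rule complex_eqI) (simp_all add: a_b_c_d_e_def algebra_simps)
  have "u * Q - R = complex_of_real b * ((u + \<i>) * z^2 + 2 * v * z + (u - \<i>))
          - 2 * z * (complex_of_real b * v - (complex_of_real d * u - complex_of_real e))"
    unfolding Q_def R_def by (simp add: algebra_simps)
  also have "\<dots> = 0" using eq bv by simp
  finally have uQ: "u * Q = R" by simp
  have "R * cnj Q = u * (Q * cnj Q)" using uQ by (simp add: mult.assoc)
  also have "\<dots> = u * complex_of_real ((cmod Q)^2)" by (simp only: complex_norm_square)
  finally have "Im (R * cnj Q) = b * (cmod Q)^2" by (simp add: a_b_c_d_e_def)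
  moreover have "Im (R * cnj Q) = -((cmod z)^2 - 1) * ((b * Re z + d)^2 + (b * Im z + e)^2 + b^2 - d^2 - e^2)"
    unfolding R_def Q_def by (rule I4)
  ultimately have key: "b * (cmod Q)^2 = -((cmod z)^2 - 1) * ((b * Re z + d)^2 + (b * Im z + e)^2 + b^2 - d^2 - e^2)"
    by simp
  define K where "K = (b * Re z + d)^2 + (b * Im z + e)^2 + b^2 - d^2 - e^2"
  have K0: "K > 0" unfolding K_def using h2 by (smt (verit) zero_le_power2)
  show "cmod z < 1"
  proof (rule ccontr)
    assume "\<not> cmod z < 1"
    hence z1: "cmod z \<ge> 1" by simp
    hence z2: "(cmod z)^2 \<ge> 1" using power_mono[of 1 "cmod z" 2] by simp
    show False
    proof (cases "(cmod z)^2 > 1")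
      case True
      hence "((cmod z)^2 - 1) * K > 0" using K0 by simp
      moreover have "b * (cmod Q)^2 \<ge> 0" using b0 by simp
      ultimately show False using key unfolding K_def[symmetric] by linarith
    next
      case False
      hence zz: "(cmod z)^2 = 1" using z2 by simp
      hence "b * (cmod Q)^2 = 0" using key by simp
      hence "Q = 0" using b0 by simp
      hence "R = 0" using uQ by simp
      have "\<i> * Q + R = 2 * \<i> * complex_of_real b + 2 * (complex_of_real e + \<i> * complex_of_real d) * z"
        unfolding Q_def R_def by (simp add: algebra_simps power2_eq_square)
      hence E0: "2 * \<i> * complex_of_real b + 2 * (complex_of_real e + \<i> * complex_of_real d) * z = 0"
        using \<open>Q = 0\<close> \<open>R = 0\<close> by simp
      have "(complex_of_real e + \<i> * complex_of_real d) * z =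
         ((2 * \<i> * complex_of_real b + 2 * (complex_of_real e + \<i> * complex_of_real d) * z) - 2 * \<i> * complex_of_real b) / 2"
        by simp
      also have "\<dots> = - \<i> * complex_of_real b" unfolding E0 by simp
      finally have "(complex_of_real e + \<i> * complex_of_real d) * z = - \<i> * complex_of_real b" .
      hence "(cmod ((complex_of_real e + \<i> * complex_of_real d) * z))^2 = (cmod (- \<i> * complex_of_real b))^2"
        by simp
      hence "(e^2 + d^2) * (cmod z)^2 = b^2" by (simp add: norm_mult power_mult_distrib wsq)
      thus False using zz h2 by simp
    qed
  qed
qed

lemma prod_ineq: fixes r s :: real assumes "0 \<le> r" "r < 1" "0 \<le> s" "s < 1"
  shows "r * (1 - s^2) + s * (1 - r^2) < 1 - r^2 * s^2"
proof -
  have "1 - r^2 * s^2 - (r * (1 - s^2) + s * (1 - r^2)) = (1-r) * (1-s) * (1 - r * s)"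
    by (simp add: power2_eq_square algebra_simps)
  moreover have "r * s < 1" using assms by (metis mult_le_one less_le_not_le mult_strict_mono' not_less order.strict_trans1 mult_1_right)
  hence "(1-r) * (1-s) * (1 - r * s) > 0" using assms by simp
  ultimately show ?thesis by linarith
qed

lemma c3_bwd:
  assumes nz: "u + \<i> \<noteq> 0" and roots: "\<And>z. (u + \<i>) * z^2 + 2 * v * z + (u - \<i>) = 0 \<Longrightarrow> cmod z < 1"
  shows "hub u v"
proof -
  define A0 where "A0 = u + \<i>"
  define p where "p = 2 * v / A0"
  define q where "q = (u - \<i>) / A0"
  define s where "s = csqrt (p^2 - 4*q)"
  define z1 where "z1 = (-p + s) / 2"
  define z2 where "z2 = (-p - s) / 2"
  define w where "w = complex_of_real (Im v) + \<i> * complex_of_real (Im (cnj u * v))"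
  have A0nz: "A0 \<noteq> 0" using nz unfolding A0_def .
  have cA0nz: "cnj A0 \<noteq> 0" using A0nz by simp
  have Ap: "A0 * p = 2 * v" unfolding p_def using A0nz by simp
  have Aq: "A0 * q = u - \<i>" unfolding q_def using A0nz by simp
  have ss: "s^2 = p^2 - 4*q" unfolding s_def by simp
  have rt: "cmod z < 1" if "z^2 + p*z + q = 0" for z
  proof -
    have "(u + \<i>) * z^2 + 2 * v * z + (u - \<i>) = A0 * (z^2 + p*z + q)"
      unfolding Ap[symmetric] Aq[symmetric] A0_def[symmetric] by (simp add: algebra_simps)
    also have "\<dots> = 0" using that by simp
    finally show ?thesis by (rule roots)
  qed
  have "z1^2 + p*z1 + q = (s^2 - (p^2 - 4*q)) / 4" unfolding z1_def by (simp add: field_simps power2_eq_square)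
  hence r1: "cmod z1 < 1" using ss rt by simp
  have "z2^2 + p*z2 + q = (s^2 - (p^2 - 4*q)) / 4" unfolding z2_def by (simp add: field_simps power2_eq_square)
  hence r2: "cmod z2 < 1" using ss rt by simp
  have hsum: "z1 + z2 = -p" unfolding z1_def z2_def by (simp add: field_simps)
  have "z1 * z2 = (p^2 - s^2)/4" unfolding z1_def z2_def by (simp add: field_simps power2_eq_square)
  hence hprod: "z1 * z2 = q" using ss by simp
  have k1: "A0 * cnj A0 * (p - cnj p * q) = 2 * v * cnj A0 - 2 * cnj v * (u - \<i>)"
  proof -
    have "A0 * cnj A0 * (p - cnj p * q) = cnj A0 * (A0 * p) - cnj (A0 * p) * (A0 * q)"
      by (simp add: algebra_simps)
    also have "\<dots> = 2 * v * cnj A0 - 2 * cnj v * (u - \<i>)" unfolding Ap Aq by simp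
    finally show ?thesis .
  qed
  have k2: "2 * v * cnj A0 - 2 * cnj v * (u - \<i>) = 4 * w"
    unfolding A0_def w_def by (rule complex_eqI) (simp_all add: algebra_simps)
  define T where "T = z1 * complex_of_real (1 - (cmod z2)^2) + z2 * complex_of_real (1 - (cmod z1)^2)"
  have pT: "p - cnj p * q = - T"
  proof -
    have c1: "cnj z1 * z1 = complex_of_real ((cmod z1)^2)" by (simp only: complex_norm_square mult.commute)
    have c2: "cnj z2 * z2 = complex_of_real ((cmod z2)^2)" by (simp only: complex_norm_square mult.commute)
    have "p - cnj p * q = -(z1 + z2) + cnj (z1 + z2) * (z1 * z2)" using hsum hprod by simp
    also have "\<dots> = - z1 - z2 + (cnj z1 * z1) * z2 + (cnj z2 * z2) * z1" by (simp add: algebra_simps)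
    also have "\<dots> = - T" unfolding c1 c2 T_def by (simp add: algebra_simps)
    finally show ?thesis .
  qed
  have Tle: "cmod T \<le> cmod z1 * (1 - (cmod z2)^2) + cmod z2 * (1 - (cmod z1)^2)"
  proof -
    have "cmod T \<le> cmod (z1 * complex_of_real (1 - (cmod z2)^2)) + cmod (z2 * complex_of_real (1 - (cmod z1)^2))"
      unfolding T_def by (rule norm_triangle_ineq)
    also have "\<dots> = cmod z1 * (1 - (cmod z2)^2) + cmod z2 * (1 - (cmod z1)^2)"
    proof -
      have "(cmod z2)^2 \<le> 1" "(cmod z1)^2 \<le> 1" using r1 r2 by (simp_all add: power_le_one)
      hence a: "cmod (complex_of_real (1 - (cmod z2)^2)) = 1 - (cmod z2)^2"
        and b: "cmod (complex_of_real (1 - (cmod z1)^2)) = 1 - (cmod z1)^2"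
        by (simp_all only: norm_of_real)
      show ?thesis by (simp only: norm_mult a b)
    qed
    finally show ?thesis .
  qed
  hence Tlt: "cmod T < 1 - (cmod z1)^2 * (cmod z2)^2" using prod_ineq[of "cmod z1" "cmod z2"] r1 r2 by simp
  have W4: "4 * cmod w = (cmod A0)^2 * cmod T"
  proof -
    have "4 * cmod w = cmod (4 * w)" by simp
    also have "\<dots> = cmod (A0 * cnj A0 * (- T))" using k1 k2 pT by simp
    also have "\<dots> = (cmod A0)^2 * cmod T" by (simp add: norm_mult power2_eq_square)
    finally show ?thesis .
  qed
  have b4: "4 * Im u = (cmod A0)^2 * (1 - (cmod z1)^2 * (cmod z2)^2)"
  proof -
    have "4 * Im u = (cmod A0)^2 - (cmod (u - \<i>))^2" unfolding A0_def cmod_power2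
      by (simp add: power2_eq_square algebra_simps)
    also have "cmod (u - \<i>) = cmod A0 * (cmod z1 * cmod z2)" unfolding Aq[symmetric] hprod[symmetric]
      by (simp add: norm_mult)
    finally show ?thesis by (simp add: power_mult_distrib algebra_simps)
  qed
  have "(cmod A0)^2 > 0" using A0nz by simp
  hence "4 * cmod w < 4 * Im u" unfolding W4 b4 using Tlt by (intro mult_strict_left_mono) auto
  thus "hub u v" unfolding hub_def w_def by simp
qed

lemma c3: "hub u v \<longleftrightarrow> (u + \<i> \<noteq> 0 \<and> (\<forall>z. (u + \<i>) * z^2 + 2 * v * z + (u - \<i>) = 0 \<longrightarrow> z \<in> ball 0 1))"
proof
  assume h: "hub u v"
  have "Im (u + \<i>) > 0" using h hub_iff by simp
  hence "u + \<i> \<noteq> 0" by (metis less_irrefl zero_complex.sel(2))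
  thus "u + \<i> \<noteq> 0 \<and> (\<forall>z. (u + \<i>) * z^2 + 2 * v * z + (u - \<i>) = 0 \<longrightarrow> z \<in> ball 0 1)"
    using c3_fwd[OF h] by auto
next
  assume "u + \<i> \<noteq> 0 \<and> (\<forall>z. (u + \<i>) * z^2 + 2 * v * z + (u - \<i>) = 0 \<longrightarrow> z \<in> ball 0 1)"
  thus "hub u v" by (intro c3_bwd) auto
qed

theorem theorem4p4:
  fixes u v :: complex
  shows "((u, v) \<in> D1 \<longleftrightarrow>
            (cmod (1 + u^2 - v^2) < 1 + (cmod u)^2 - (cmod v)^2 \<and> 0 < Im (u * (1 + cnj v))))
       \<and> ((u, v) \<in> D1 \<longleftrightarrow>
            (u + \<i> \<noteq> 0 \<and> (\<forall>z. (u + \<i>) * z^2 + 2 * v * z + (u - \<i>) = 0 \<longrightarrow> z \<in> ball 0 1)))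
       \<and> ((u, v) \<in> D1 \<longleftrightarrow>
            cmod (complex_of_real (Im v) + \<i> * complex_of_real (Im (cnj u * v))) < Im u)
       \<and> ((u, v) \<in> D1 \<longleftrightarrow>
            (cmod v < cmod (u + \<i>) \<and>
             cmod (complex_of_real (Im v) + \<i> * complex_of_real (Im (cnj u * v))) < Im u))
       \<and> ((u, v) \<in> D1 \<longleftrightarrow>
            (\<forall>\<alpha> \<in> cball 0 1. u + \<i> + \<alpha> * v \<noteq> 0 \<and>
                cmod ((\<alpha> * (u - \<i>) + v) / (u + \<i> + \<alpha> * v)) < 1))
       \<and> ((u, v) \<in> D1 \<longleftrightarrow>
            (\<forall>\<alpha> \<in> cball 0 1. u + \<i> + \<alpha> * v \<noteq> 0 \<and>
                cmod ((u - \<i> + cnj \<alpha> * v) / (u + \<i> + \<alpha> * v)) < 1))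
       \<and> ((u, v) \<in> D1 \<longleftrightarrow>
            2 * cmod (complex_of_real (Im v) + \<i> * complex_of_real (Im (cnj u * v)))
              + cmod (1 + u^2 - v^2) < (cmod (\<i> + u))^2 - (cmod v)^2)
       \<and> ((u, v) \<in> D1 \<longleftrightarrow>
            (Im u > 0 \<and> (\<exists>\<beta> \<in> ball 0 1.
                v + complex_of_real (Re \<beta>) * u + complex_of_real (Im \<beta>) = 0)))"
proof -
  have A: "(u, v) \<in> D1 \<longleftrightarrow> (cmod (1 + u^2 - v^2) < 1 + (cmod u)^2 - (cmod v)^2 \<and> 0 < Im (u * (1 + cnj v)))"
    unfolding D1_def mem_Collect_eq case_prod_conv by (rule refl)
  have H: "hub u v \<longleftrightarrow> cmod (complex_of_real (Im v) + \<i> * complex_of_real (Im (cnj u * v))) < Im u"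
    by (rule hub_def)
  show ?thesis unfolding D1_hub
    using A[unfolded D1_hub] H c3[of u v] c5[of u v] c6[of u v] c7[of u v] c8[of u v] c9[of u v]
    by blast
qed

end
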